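(* Let $G$ be a finite nilpotent group. Then $G$ contains no word image impostor if and only if $G$ is an abelian group of prime exponent.
   Context: $F_d$ is the free group on $d$ letters; for $w\in F_d$, $w(G)$ is the image of the word map $G^d\to G$ given by evaluating $w$. A subset $A\subseteq G$ is a word image candidate if $1\in A$ and $\varphi(A)\subseteq A$ for every automorphism $\varphi$ of $G$. A word image impostor is a word image candidate $A$ such that $A\neq w(G)$ for every $d\ge1$ and every $w\in F_d$. *)

theory Defs
  imports "HOL-Algebra.Algebra"
begin

text \<open>Lower central series: gamma_1 = G (index 0 here), gamma_(i+1) = [gamma_i, G].\<close>
fun lower_central :: "('a, 'b) monoid_scheme \<Rightarrow> nat \<Rightarrow> 'a set" where
  "lower_central G 0 = carrier G"
| "lower_central G (Suc n) =
     generate G {h \<otimes>\<^bsub>G\<^esub> k \<otimes>\<^bsub>G\<^esub> inv\<^bsub>G\<^esub> h \<otimes>\<^bsub>G\<^esub> inv\<^bsub>G\<^esub> k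
                 | h k. h \<in> lower_central G n \<and> k \<in> carrier G}"

definition nilpotent_group :: "('a, 'b) monoid_scheme \<Rightarrow> bool" where
  "nilpotent_group G \<longleftrightarrow> group G \<and> (\<exists>n. lower_central G n = {\<one>\<^bsub>G\<^esub>})"

definition group_exponent :: "('a, 'b) monoid_scheme \<Rightarrow> nat" where
  "group_exponent G = (LEAST n. 0 < n \<and> (\<forall>x \<in> carrier G. x [^]\<^bsub>G\<^esub> n = \<one>\<^bsub>G\<^esub>))"

text \<open>Elements of the free group F_d are represented by (not necessarily reduced)
  words: lists of letters (i, b) with i < d, meaning x_i if b and x_i^(-1) otherwise.
  Every element of F_d has such a representative and evaluation is independent of
  the representative, so word images are exactly captured.\<close>
definition free_words :: "nat \<Rightarrow> (nat \<times> bool) list set" where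
  "free_words d = {w. \<forall>(i, b) \<in> set w. i < d}"

fun eval_word :: "('a, 'b) monoid_scheme \<Rightarrow> (nat \<Rightarrow> 'a) \<Rightarrow> (nat \<times> bool) list \<Rightarrow> 'a" where
  "eval_word G g [] = \<one>\<^bsub>G\<^esub>"
| "eval_word G g ((i, b) # w) =
     (if b then g i else inv\<^bsub>G\<^esub> (g i)) \<otimes>\<^bsub>G\<^esub> eval_word G g w"

definition word_image :: "('a, 'b) monoid_scheme \<Rightarrow> nat \<Rightarrow> (nat \<times> bool) list \<Rightarrow> 'a set" where
  "word_image G d w = {eval_word G g w | g. g \<in> {..<d} \<rightarrow> carrier G}"

definition word_image_candidate :: "('a, 'b) monoid_scheme \<Rightarrow> 'a set \<Rightarrow> bool" where
  "word_image_candidate G A \<longleftrightarrow> A \<subseteq> carrier G \<and> \<one>\<^bsub>G\<^esub> \<in> A \<and>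
     (\<forall>\<phi> \<in> iso G G. \<phi> ` A \<subseteq> A)"

definition word_image_impostor :: "('a, 'b) monoid_scheme \<Rightarrow> 'a set \<Rightarrow> bool" where
  "word_image_impostor G A \<longleftrightarrow> word_image_candidate G A \<and>
     (\<forall>d \<ge> 1. \<forall>w \<in> free_words d. A \<noteq> word_image G d w)"

end

theory Submission
  imports Defs "HOL-Number_Theory.Cong"
begin

lemma eval_word_carrier:
  assumes "group G" "w \<in> free_words d" "gs \<in> {..<d} \<rightarrow> carrier G"
  shows "eval_word G gs w \<in> carrier G"
  using assms(2)
proof (induction w)
  case Nil then show ?case using assms(1) by (simp add: group.is_monoid monoid.one_closed)
next
  case (Cons a w)
  obtain i b where a: "a = (i, b)" by force
  have iw: "i < d" "w \<in> free_words d" using Cons.prems a by (auto simp: free_words_def)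
  then have gi: "gs i \<in> carrier G" using assms(3) by auto
  show ?case using Cons.IH[OF iw(2)] gi a assms(1)
    by (auto simp: group.inv_closed group.is_monoid monoid.m_closed)
qed

lemma eval_word_hom:
  assumes "group G" "w \<in> free_words d" "gs \<in> {..<d} \<rightarrow> carrier G" "f \<in> hom G G"
  shows "eval_word G (f \<circ> gs) w = f (eval_word G gs w)"
  using assms(2)
proof (induction w)
  case Nil then show ?case using assms(1,4) by (simp add: hom_one)
next
  case (Cons a w)
  obtain i b where a: "a = (i, b)" by force
  have iw: "i < d" "w \<in> free_words d" using Cons.prems a by (auto simp: free_words_def)
  then have gi: "gs i \<in> carrier G" using assms(3) by auto
  have ew: "eval_word G gs w \<in> carrier G" using eval_word_carrier[OF assms(1) iw(2) assms(3)] .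
  interpret gh: group_hom G G f using assms(1,4) by (simp add: group_hom_def group_hom_axioms_def)
  show ?case using Cons.IH[OF iw(2)] gi a ew
    by (auto simp: gh.hom_mult gh.hom_inv)
qed

lemma impostor_from_endo:
  fixes G (structure)
  assumes G: "group G" and f: "f \<in> hom G G" and x: "x \<in> carrier G"
    and fx1: "f x \<noteq> \<one>\<^bsub>G\<^esub>" and fxo: "\<forall>\<phi> \<in> iso G G. f x \<noteq> \<phi> x"
  shows "\<exists>A. word_image_impostor G A"
proof -
  interpret group G by fact
  define A where "A = insert \<one> {\<phi> x | \<phi>. \<phi> \<in> iso G G}"
  have "A \<subseteq> carrier G" using x by (auto simp: A_def iso_iff hom_def)
  moreover have "\<one> \<in> A" by (simp add: A_def)
  moreover have "\<psi> ` A \<subseteq> A" if "\<psi> \<in> iso G G" for \<psi>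
  proof
    fix z assume "z \<in> \<psi> ` A"
    then obtain a where a: "a \<in> A" "z = \<psi> a" by auto
    show "z \<in> A"
    proof (cases "a = \<one>")
      case True then show ?thesis using a that
        by (simp add: A_def hom_one iso_imp_homomorphism G)
    next
      case False
      then obtain \<phi> where "\<phi> \<in> iso G G" "a = \<phi> x" using a by (auto simp: A_def)
      then show ?thesis using a that iso_set_trans[of \<phi> G G \<psi> G]
        by (auto simp: A_def intro!: exI[of _ "\<psi> \<circ> \<phi>"])
    qed
  qed
  ultimately have cand: "word_image_candidate G A" by (simp add: word_image_candidate_def)
  have "A \<noteq> word_image G d w" if "w \<in> free_words d" for d w
  proof
    assume eq: "A = word_image G d w"
    have "x \<in> A" using iso_set_refl[of G] by (auto simp: A_def)
    then obtain gs where gs: "gs \<in> {..<d} \<rightarrow> carrier G" "x = eval_word G gs w"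
      using eq by (auto simp: word_image_def)
    have "f \<circ> gs \<in> {..<d} \<rightarrow> carrier G" using gs f by (auto simp: hom_def)
    then have "f x \<in> word_image G d w"
      using eval_word_hom[OF G that gs(1) f] gs(2) unfolding word_image_def by (intro CollectI exI[of _ "f \<circ> gs"]) simp
    then have "f x \<in> A" using eq by simp
    then show False using fx1 fxo by (auto simp: A_def)
  qed
  then show ?thesis using cand by (auto simp: word_image_impostor_def)
qed

declare lower_central.simps[simp del]


lemma lower_central_carrier:
  fixes G (structure)
  assumes "group G" shows "lower_central G n \<subseteq> carrier G"
proof (induction n)
  case 0 then show ?case by (simp add: lower_central.simps)
next
  case (Suc n)
  interpret group G by fact
  show ?case using Suc unfolding lower_central.simps by (intro generate_incl) blast
qed

lemma generate_triv:
  fixes G (structure)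
  assumes "group G" "S \<subseteq> {\<one>}" shows "generate G S = {\<one>}"
proof
  interpret group G by fact
  show "generate G S \<subseteq> {\<one>}"
  proof
    fix z assume "z \<in> generate G S"
    then show "z \<in> {\<one>}" using assms(2) by induction auto
  qed
  show "{\<one>} \<subseteq> generate G S" by (auto intro: generate.one)
qed

lemma nonabelian_impostor:
  fixes G (structure)
  assumes nil: "nilpotent_group G" and nc: "\<not> comm_group G"
  shows "\<exists>A. word_image_impostor G A"
proof -
  have G: "group G" using nil by (simp add: nilpotent_group_def)
  interpret group G by fact
  obtain a b where ab: "a \<in> carrier G" "b \<in> carrier G" "a \<otimes> b \<noteq> b \<otimes> a"
    using nc group_comm_groupI by blast
  have comm1: "a \<otimes> b \<otimes> inv a \<otimes> inv b \<noteq> \<one>"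
  proof
    assume "a \<otimes> b \<otimes> inv a \<otimes> inv b = \<one>"
    then have "a \<otimes> b \<otimes> inv a \<otimes> inv b \<otimes> b \<otimes> a = b \<otimes> a" using ab by (simp add: m_assoc)
    then show False using ab by (simp add: m_assoc)
  qed
  have ex: "\<exists>n. lower_central G n = {\<one>}" using nil by (simp add: nilpotent_group_def)
  define n0 where "n0 = (LEAST n. lower_central G n = {\<one>})"
  have n0: "lower_central G n0 = {\<one>}" unfolding n0_def by (rule LeastI_ex[OF ex])
  have n0min: "lower_central G m \<noteq> {\<one>}" if "m < n0" for m
    using not_less_Least[of m "\<lambda>n. lower_central G n = {\<one>}"] that unfolding n0_def by blast
  have g1: "lower_central G 1 \<noteq> {\<one>}"
  proof
    assume "lower_central G 1 = {\<one>}"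
    moreover have "a \<otimes> b \<otimes> inv a \<otimes> inv b \<in> lower_central G 1"
      using ab by (simp only: One_nat_def lower_central.simps) (rule generate.incl, blast)
    ultimately show False using comm1 by blast
  qed
  have g0: "lower_central G 0 \<noteq> {\<one>}"
    using ab(1,2,3) by (metis lower_central.simps(1) singletonD)
  have "n0 \<noteq> 0" "n0 \<noteq> 1" using n0 g0 g1 by (metis One_nat_def)+
  then obtain j where j: "n0 = Suc (Suc j)"
    by (metis One_nat_def not0_implies_Suc)
  have Lj: "lower_central G (Suc j) \<noteq> {\<one>}" using n0min[of "Suc j"] j by (simp del: lower_central.simps)
  have LSS: "lower_central G (Suc (Suc j)) = {\<one>}" using n0 j by (simp del: lower_central.simps)
  define C where "C = {h \<otimes> k \<otimes> inv h \<otimes> inv k | h k. h \<in> lower_central G j \<and> k \<in> carrier G}"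
  have LjC: "lower_central G (Suc j) = generate G C" unfolding C_def by (simp only: lower_central.simps)
  obtain h g where hg: "h \<in> lower_central G j" "g \<in> carrier G" "h \<otimes> g \<otimes> inv h \<otimes> inv g \<noteq> \<one>"
  proof -
    have "\<not> C \<subseteq> {\<one>}" using Lj LjC generate_triv[OF G] by metis
    then show ?thesis using that unfolding C_def by blast
  qed
  have hc: "h \<in> carrier G" using hg(1) lower_central_carrier[OF G] by auto
  have central: "c \<otimes> y = y \<otimes> c" if "c \<in> lower_central G (Suc j)" "y \<in> carrier G" for c y
  proof -
    have cc: "c \<in> carrier G" using that(1) lower_central_carrier[OF G] by blast
    have "c \<otimes> y \<otimes> inv c \<otimes> inv y \<in> lower_central G (Suc (Suc j))"
      using that unfolding lower_central.simps(2)[of G "Suc j"] by (intro generate.incl) blast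
    then have "c \<otimes> y \<otimes> inv c \<otimes> inv y = \<one>" using LSS by simp
    then have "c \<otimes> y \<otimes> inv c \<otimes> inv y \<otimes> y \<otimes> c = y \<otimes> c" using that cc by (simp add: m_assoc)
    then show ?thesis using that cc by (simp add: m_assoc)
  qed
  define f where "f = (\<lambda>y. y \<otimes> h \<otimes> inv y \<otimes> inv h)"
  have fc: "f y \<in> carrier G" if "y \<in> carrier G" for y using that hc by (simp add: f_def)
  have fL: "f y \<in> lower_central G (Suc j)" if "y \<in> carrier G" for y
  proof -
    have "inv (h \<otimes> y \<otimes> inv h \<otimes> inv y) \<in> lower_central G (Suc j)"
      using hg(1) that unfolding lower_central.simps(2)[of G j] by (intro generate.inv) blast
    moreover have "inv (h \<otimes> y \<otimes> inv h \<otimes> inv y) = f y"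
      using hc that by (simp add: f_def inv_mult_group m_assoc)
    ultimately show ?thesis by simp
  qed
  have fhom: "f \<in> hom G G"
  proof (rule homI)
    fix y z assume yz: "y \<in> carrier G" "z \<in> carrier G"
    show "f y \<in> carrier G" using fc yz by simp
    have "f (y \<otimes> z) = y \<otimes> (f z \<otimes> h) \<otimes> inv y \<otimes> inv h"
      using yz hc by (simp add: f_def m_assoc inv_mult_group)
    also have "\<dots> = y \<otimes> f z \<otimes> h \<otimes> inv y \<otimes> inv h"
      using yz hc fc by (simp add: m_assoc)
    also have "\<dots> = f z \<otimes> y \<otimes> h \<otimes> inv y \<otimes> inv h"
      using central[OF fL[OF yz(2)] yz(1)] by simp
    also have "\<dots> = f z \<otimes> f y"
      using yz hc fc by (simp add: f_def m_assoc)
    also have "\<dots> = f y \<otimes> f z"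
      using central[OF fL[OF yz(2)] fc[OF yz(1)]] by simp
    finally show "f (y \<otimes> z) = f y \<otimes> f z" .
  qed
  have gh: "g \<otimes> h \<noteq> h \<otimes> g"
  proof
    assume "g \<otimes> h = h \<otimes> g"
    then have "h \<otimes> g \<otimes> inv h \<otimes> inv g = g \<otimes> h \<otimes> inv h \<otimes> inv g" by simp
    also have "\<dots> = \<one>" using hc hg(2) by (simp add: m_assoc)
    finally show False using hg(3) by simp
  qed
  have fg1: "f g \<noteq> \<one>"
  proof
    assume "f g = \<one>"
    then have "g \<otimes> h \<otimes> inv g \<otimes> inv h \<otimes> h \<otimes> g = h \<otimes> g" using hc hg(2) by (simp add: f_def m_assoc)
    then show False using gh hc hg(2) by (simp add: m_assoc)
  qed
  have fgo: "\<forall>\<phi> \<in> iso G G. f g \<noteq> \<phi> g"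
  proof (intro ballI notI)
    fix \<phi> assume phi: "\<phi> \<in> iso G G" and eq: "f g = \<phi> g"
    have ph: "\<phi> \<in> hom G G" "inj_on \<phi> (carrier G)" using phi by (auto simp: iso_iff)
    have "\<phi> (g \<otimes> h) = \<phi> (h \<otimes> g)"
    proof -
      have "\<phi> (g \<otimes> h) = \<phi> g \<otimes> \<phi> h" using ph hc hg(2) by (simp add: hom_mult)
      also have "\<dots> = \<phi> h \<otimes> \<phi> g"
        using central[OF fL[OF hg(2)], of "\<phi> h"] eq ph hc by (simp add: hom_in_carrier)
      also have "\<dots> = \<phi> (h \<otimes> g)" using ph hc hg(2) by (simp add: hom_mult)
      finally show ?thesis .
    qed
    then have "g \<otimes> h = h \<otimes> g" using ph(2) hc hg(2) by (simp add: inj_on_def)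
    then show False using gh by simp
  qed
  show ?thesis using impostor_from_endo[OF G fhom hg(2) fg1 fgo] .
qed

lemma abelian_nonprime_impostor:
  fixes G (structure)
  assumes cg: "comm_group G" and fin: "finite (carrier G)" and nt: "carrier G \<noteq> {\<one>}"
    and np: "\<not> Factorial_Ring.prime (group_exponent G)"
  shows "\<exists>A. word_image_impostor G A"
proof -
  interpret comm_group G by fact
  have G: "group G" by (rule is_group)
  show ?thesis
  proof (cases "\<exists>x \<in> carrier G. ord x \<noteq> 1 \<and> \<not> Factorial_Ring.prime (ord x)")
    case True
    then obtain x where x: "x \<in> carrier G" "ord x \<noteq> 1" "\<not> Factorial_Ring.prime (ord x)" by blast
    have o1: "ord x > 1" using ord_ge_1[OF fin x(1)] x(2) by linarith
    then obtain a where a: "a dvd ord x" "a \<noteq> 1" "a \<noteq> ord x"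
      using x(3) prime_nat_iff by blast
    then obtain b where b: "ord x = a * b" by (auto elim: dvdE)
    have apos: "a > 0" "b > 0" using b o1 by (auto intro!: Nat.gr0I)
    have alt: "a < ord x" using a dvd_imp_le[OF a(1)] o1 by linarith
    have blt: "b < ord x" using b a(2) apos by (simp add: nat_mult_less_cancel1 del: mult_less_cancel2)
    define f where "f = (\<lambda>y. y [^] a)"
    have fhom: "f \<in> hom G G"
      by (rule homI) (simp_all add: f_def nat_pow_distrib)
    have fx1: "f x \<noteq> \<one>" using alt apos x(1) by (auto simp: f_def pow_eq_id dest: dvd_imp_le)
    have fxo: "\<forall>\<phi> \<in> iso G G. f x \<noteq> \<phi> x"
    proof (intro ballI notI)
      fix \<phi> assume phi: "\<phi> \<in> iso G G" and eq: "f x = \<phi> x"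
      have ph: "\<phi> \<in> hom G G" "inj_on \<phi> (carrier G)" using phi by (auto simp: iso_iff)
      have "\<phi> (x [^] b) = (\<phi> x) [^] b" using hom_nat_pow[OF ph(1) x(1) G G] .
      also have "\<dots> = x [^] (a * b)" using eq x(1) by (metis f_def nat_pow_pow)
      also have "\<dots> = \<one>" using b x(1) pow_ord_eq_1 by metis
      also have "\<dots> = \<phi> \<one>" using ph(1) G by (simp add: hom_one)
      finally have "x [^] b = \<one>" using ph(2) x(1) by (simp add: inj_on_def)
      then show False using blt apos x(1) by (auto simp: pow_eq_id dest: dvd_imp_le)
    qed
    show ?thesis using impostor_from_endo[OF G fhom x(1) fx1 fxo] .
  next
    case False
    then have allp: "\<And>x. x \<in> carrier G \<Longrightarrow> x \<noteq> \<one> \<Longrightarrow> Factorial_Ring.prime (ord x)"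
      using ord_eq_1 by blast
    obtain x0 where x0: "x0 \<in> carrier G" "x0 \<noteq> \<one>" using nt one_closed by blast
    define p where "p = ord x0"
    have pp: "Factorial_Ring.prime p" using allp x0 by (simp add: p_def)
    have allpow: "y [^] p = \<one>" if y: "y \<in> carrier G" for y
    proof (rule ccontr)
      assume ny: "y [^] p \<noteq> \<one>"
      have y1: "y \<noteq> \<one>" using ny by auto
      define q where "q = ord y"
      have qp: "Factorial_Ring.prime q" using allp y y1 by (simp add: q_def)
      have "q \<noteq> p" using ny y by (auto simp: q_def)
      define z where "z = x0 \<otimes> y"
      have zc: "z \<in> carrier G" using x0 y by (simp add: z_def)
      have zp: "z [^] p = y [^] p" using x0 y by (simp add: z_def nat_pow_distrib p_def)
      have x0q: "x0 [^] q \<noteq> \<one>"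
      proof
        assume "x0 [^] q = \<one>"
        then have "p dvd q" using x0 by (simp add: pow_eq_id p_def)
        then show False using \<open>q \<noteq> p\<close> pp qp primes_dvd_imp_eq by metis
      qed
      have zq: "z [^] q = x0 [^] q" using x0 y by (simp add: z_def nat_pow_distrib q_def)
      have z1: "z \<noteq> \<one>" using zp ny x0 y by auto
      have rp: "Factorial_Ring.prime (ord z)" using allp zc z1 by simp
      have "z [^] (p * q) = \<one>"
        proof -
        have "x0 [^] (p * q) = \<one>" using x0 by (simp add: pow_eq_id p_def)
        moreover have "y [^] (p * q) = \<one>" using y by (simp add: pow_eq_id q_def)
        ultimately show ?thesis using x0 y by (simp add: z_def nat_pow_distrib)
      qed
      then have "ord z dvd p * q" using zc by (simp add: pow_eq_id)
      then have "ord z dvd p \<or> ord z dvd q" using rp prime_dvd_mult_iff by blast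
      then have "ord z = p \<or> ord z = q" using rp pp qp primes_dvd_imp_eq by metis
      then show False using zp zq ny x0q zc by (metis pow_ord_eq_1)
    qed
    have "group_exponent G = p"
      unfolding group_exponent_def
    proof (rule Least_equality)
      show "0 < p \<and> (\<forall>x\<in>carrier G. x [^] p = \<one>)" using pp allpow prime_gt_0_nat by blast
      show "p \<le> n" if "0 < n \<and> (\<forall>x\<in>carrier G. x [^] n = \<one>)" for n
        using that x0 by (auto simp: pow_eq_id p_def intro: dvd_imp_le)
    qed
    then show ?thesis using np pp by simp
  qed
qed

lemma subgroup_pow_closed:
  fixes G (structure)
  assumes "group G" "subgroup H G" "h \<in> H" shows "h [^] (n::nat) \<in> H"
proof (induction n)
  case 0 then show ?case using assms by (simp add: subgroup.one_closed)
next
  case (Suc n)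
  interpret group G by fact
  show ?case using Suc assms subgroup.m_closed[OF assms(2)] by simp
qed

locale elab = comm_group G for G (structure) +
  fixes p :: nat
  assumes fin: "finite (carrier G)" and pp: "Factorial_Ring.prime p"
    and expo: "\<And>x. x \<in> carrier G \<Longrightarrow> x [^] p = \<one>"
begin

lemma pow_mod: assumes "x \<in> carrier G" shows "x [^] n = x [^] (n mod p)"
proof -
  have "x [^] n = x [^] (p * (n div p) + n mod p)" by simp
  also have "\<dots> = (x [^] p) [^] (n div p) \<otimes> x [^] (n mod p)"
    using assms by (simp add: nat_pow_mult nat_pow_pow)
  also have "\<dots> = x [^] (n mod p)" using assms expo by simp
  finally show ?thesis .
qed

lemma pow_dvd_one: assumes "x \<in> carrier G" "p dvd n" shows "x [^] n = \<one>"
  using pow_mod[OF assms(1), of n] assms(2) by simp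

lemma inv_exp: assumes "\<not> p dvd j" shows "\<exists>j'. (j * j') mod p = 1"
proof -
  have "coprime j p" using assms pp prime_imp_coprime coprime_commute by metis
  then obtain j' where "[j * j' = Suc 0] (mod p)" using cong_solve_coprime_nat by blast
  moreover have "p > 1" using pp prime_gt_1_nat by blast
  ultimately have "(j * j') mod p = 1" by (simp add: cong_def)
  then show ?thesis by blast
qed

lemma pow_in_sub:
  assumes H: "subgroup H G" and x: "x \<in> carrier G" and xj: "x [^] j \<in> H" and nd: "\<not> p dvd j"
  shows "x \<in> H"
proof -
  obtain j' where j': "(j * j') mod p = 1" using inv_exp[OF nd] by blast
  have "x = x [^] (1::nat)" using x by simp
  also have "\<dots> = x [^] (j * j')" using pow_mod[OF x, of "j * j'"] j' by simp
  also have "\<dots> = (x [^] j) [^] j'" using x by (simp add: nat_pow_pow)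
  also have "\<dots> \<in> H" using subgroup_pow_closed[OF is_group H xj] .
  finally show ?thesis .
qed

definition span :: "'a set \<Rightarrow> 'a \<Rightarrow> 'a set" where
  "span M g = {m \<otimes> g [^] (k::nat) | m k. m \<in> M}"

lemma span_sub:
  assumes M: "subgroup M G" and g: "g \<in> carrier G"
  shows "subgroup (span M g) G"
proof (rule subgroupI)
  have Mc: "M \<subseteq> carrier G" using M subgroup.subset by blast
  show "span M g \<subseteq> carrier G" using Mc g by (auto simp: span_def)
  show "span M g \<noteq> {}" using subgroup.one_closed[OF M] by (auto simp: span_def)
  show "inv a \<in> span M g" if aS: "a \<in> span M g" for a
  proof -
    obtain m k where mk: "m \<in> M" "a = m \<otimes> g [^] (k::nat)" using aS by (auto simp: span_def)
    have mc: "m \<in> carrier G" using mk Mc by blast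
    have i: "inv (g [^] k) = g [^] ((p - 1) * k)"
    proof (rule inv_equality)
      have "g [^] ((p - 1) * k) \<otimes> g [^] k = g [^] ((p - 1) * k + k)" using g by (simp add: nat_pow_mult)
      also have "(p - 1) * k + k = p * k" using prime_gt_0_nat[OF pp] by (simp add: algebra_simps)
      also have "g [^] (p * k) = \<one>" using pow_dvd_one[OF g] by simp
      finally show "g [^] ((p - 1) * k) \<otimes> g [^] k = \<one>" .
    qed (use g in auto)
    have "inv a = inv m \<otimes> inv (g [^] k)" using mk mc g by (simp add: inv_mult)
    also have "\<dots> = inv m \<otimes> g [^] ((p - 1) * k)" using i by simp
    finally show ?thesis using subgroup.m_inv_closed[OF M mk(1)] by (auto simp: span_def)
  qed
  show "a \<otimes> b \<in> span M g" if aS: "a \<in> span M g" and bS: "b \<in> span M g" for a b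
  proof -
    obtain m k where mk: "m \<in> M" "a = m \<otimes> g [^] (k::nat)" using aS by (auto simp: span_def)
    obtain m' k' where mk': "m' \<in> M" "b = m' \<otimes> g [^] (k'::nat)" using bS by (auto simp: span_def)
    have mc: "m \<in> carrier G" "m' \<in> carrier G" using mk mk' Mc by auto
    have "a \<otimes> b = (m \<otimes> m') \<otimes> g [^] (k + k')"
      using mc g mk mk' by (simp add: nat_pow_mult m_ac add.commute)
    then show ?thesis using subgroup.m_closed[OF M mk(1) mk'(1)] by (auto simp: span_def)
  qed
qed

lemma span_M: assumes "subgroup M G" "m \<in> M" shows "m \<in> span M g"
proof -
  have "m \<in> carrier G" using assms subgroup.subset by blast
  then have "m = m \<otimes> g [^] (0::nat)" by simp
  then show ?thesis using assms unfolding span_def by blast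
qed

lemma span_g: assumes "subgroup M G" "g \<in> carrier G" shows "g \<in> span M g"
proof -
  have "g = \<one> \<otimes> g [^] (1::nat)" using assms by simp
  then show ?thesis using subgroup.one_closed[OF assms(1)] unfolding span_def by blast
qed

lemma max_exists:
  assumes "subgroup M0 G" "x \<notin> M0"
  shows "\<exists>M. subgroup M G \<and> M0 \<subseteq> M \<and> x \<notin> M \<and>
             (\<forall>H. subgroup H G \<and> M \<subseteq> H \<and> x \<notin> H \<longrightarrow> H = M)"
proof -
  define S where "S = {H. subgroup H G \<and> M0 \<subseteq> H \<and> x \<notin> H}"
  have "S \<subseteq> Pow (carrier G)" using subgroup.subset by (auto simp: S_def)
  then have "finite S" using fin finite_Pow_iff rev_finite_subset by metis
  moreover have "M0 \<in> S" using assms by (simp add: S_def)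
  ultimately obtain M where "M \<in> S" "M0 \<subseteq> M" "\<forall>b\<in>S. M \<subseteq> b \<longrightarrow> M = b"
    using finite_has_maximal2 by metis
  then have "subgroup M G \<and> M0 \<subseteq> M \<and> x \<notin> M \<and>
             (\<forall>H. subgroup H G \<and> M \<subseteq> H \<and> x \<notin> H \<longrightarrow> H = M)"
    unfolding S_def by (metis (mono_tags, lifting) mem_Collect_eq subset_trans)
  then show ?thesis by blast
qed

lemma decomp:
  assumes M: "subgroup M G" and x: "x \<in> carrier G" and xM: "x \<notin> M"
    and mx: "\<forall>H. subgroup H G \<and> M \<subseteq> H \<and> x \<notin> H \<longrightarrow> H = M"
    and g: "g \<in> carrier G"
  shows "\<exists>m\<in>M. \<exists>k. g = m \<otimes> x [^] (k::nat)"
proof (rule ccontr)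
  assume ng: "\<not> ?thesis"
  then have gS: "g \<notin> span M x" by (auto simp: span_def)
  have Mc: "M \<subseteq> carrier G" using M subgroup.subset by blast
  have gM: "g \<notin> M" using span_M[OF M, of g x] gS by blast
  have "span M g \<noteq> M" using span_g[OF M g] gM by blast
  moreover have "M \<subseteq> span M g" using span_M[OF M] by blast
  ultimately have "x \<in> span M g" using mx span_sub[OF M g] by blast
  then obtain m k where mk: "m \<in> M" "x = m \<otimes> g [^] (k::nat)" by (auto simp: span_def)
  have mc: "m \<in> carrier G" using mk Mc by blast
  show False
  proof (cases "p dvd k")
    case True
    then have "x = m" using mk mc pow_dvd_one[OF g] by simp
    then show False using xM mk by simp
  next
    case False
    have "g [^] k = inv m \<otimes> x" using mk mc g by (simp add: m_assoc[symmetric])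
    moreover have "inv m \<otimes> x \<in> span M x"
      using subgroup.m_inv_closed[OF M mk(1)] unfolding span_def
      by (intro CollectI exI[of _ "inv m"] exI[of _ "1::nat"]) (simp add: x)
    ultimately have "g [^] k \<in> span M x" by simp
    then have "g \<in> span M x" using pow_in_sub[OF span_sub[OF M x] g _ False] by blast
    then show False using gS by blast
  qed
qed

lemma uniq:
  assumes M: "subgroup M G" and u: "u \<in> carrier G" and uM: "\<And>j. u [^] j \<in> M \<Longrightarrow> p dvd j"
    and v: "v \<in> carrier G" and m: "m \<in> M" "m' \<in> M"
    and eq: "m \<otimes> u [^] (k::nat) = m' \<otimes> u [^] (k'::nat)"
  shows "m \<otimes> v [^] k = m' \<otimes> v [^] k'"
proof -
  have Mc: "M \<subseteq> carrier G" using M subgroup.subset by blast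
  have mc: "m \<in> carrier G" "m' \<in> carrier G" using m Mc by auto
  have main: "m \<otimes> v [^] k = m' \<otimes> v [^] k'"
    if m: "m \<in> M" "m' \<in> M" and eq: "m \<otimes> u [^] k = m' \<otimes> u [^] k'" and le: "k' \<le> k"
    for m m' and k k' :: nat
  proof -
    have mc: "m \<in> carrier G" "m' \<in> carrier G" using m Mc by auto
    have kk: "k = (k - k') + k'" using le by simp
    have "m \<otimes> u [^] (k - k') \<otimes> u [^] k' = m' \<otimes> u [^] k'"
      using eq mc u by (simp add: m_assoc nat_pow_mult kk[symmetric])
    then have "m \<otimes> u [^] (k - k') = m'" using mc u by (simp add: r_cancel)
    then have "u [^] (k - k') = inv m \<otimes> m'" using mc u by (auto simp: m_assoc[symmetric])
    then have "u [^] (k - k') \<in> M" using subgroup.m_inv_closed[OF M m(1)] subgroup.m_closed[OF M _ m(2)] by simp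
    then have d: "p dvd (k - k')" by (rule uM)
    then have "u [^] (k - k') = \<one>" using pow_dvd_one[OF u] by simp
    then have mm: "m = m'" using \<open>m \<otimes> u [^] (k - k') = m'\<close> mc by simp
    have "v [^] k = v [^] (k - k') \<otimes> v [^] k'" using v by (simp add: nat_pow_mult kk[symmetric])
    also have "\<dots> = v [^] k'" using pow_dvd_one[OF v d] v by simp
    finally show ?thesis using mm by simp
  qed
  show ?thesis
  proof (cases "k' \<le> k")
    case True then show ?thesis using main[OF m eq] by simp
  next
    case False then show ?thesis using main[OF m(2) m(1) eq[symmetric]] by simp
  qed
qed

lemma auto_exists:
  assumes M: "subgroup M G" and x: "x \<in> carrier G" and xM: "x \<notin> M"
    and mx: "\<forall>H. subgroup H G \<and> M \<subseteq> H \<and> x \<notin> H \<longrightarrow> H = M"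
    and y: "y \<in> carrier G" and yM: "\<And>j. y [^] j \<in> M \<Longrightarrow> p dvd j"
  shows "\<exists>\<phi> \<in> iso G G. \<phi> x = y"
proof -
  have Mc: "M \<subseteq> carrier G" using M subgroup.subset by blast
  have xM': "\<And>j. x [^] j \<in> M \<Longrightarrow> p dvd j"
    using pow_in_sub[OF M x] xM by blast
  define \<phi> where "\<phi> g = (SOME z. \<exists>m\<in>M. \<exists>k::nat. g = m \<otimes> x [^] k \<and> z = m \<otimes> y [^] k)" for g
  have phi: "\<phi> g = m \<otimes> y [^] k" if "m \<in> M" "g = m \<otimes> x [^] k" for g m and k :: nat
  proof -
    have "\<exists>z. \<exists>m\<in>M. \<exists>k::nat. g = m \<otimes> x [^] k \<and> z = m \<otimes> y [^] k" using that by blast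
    then have "\<exists>m'\<in>M. \<exists>k'::nat. g = m' \<otimes> x [^] k' \<and> \<phi> g = m' \<otimes> y [^] k'"
      unfolding \<phi>_def by (rule someI_ex)
    then obtain m' k' where mk: "m' \<in> M" "g = m' \<otimes> x [^] (k'::nat)" "\<phi> g = m' \<otimes> y [^] k'" by blast
    have "m' \<otimes> y [^] k' = m \<otimes> y [^] k"
      using uniq[OF M x xM' y mk(1) that(1)] mk(2) that(2) by simp
    then show ?thesis using mk(3) by simp
  qed
  have dec: "\<exists>m\<in>M. \<exists>k. g = m \<otimes> x [^] (k::nat)" if "g \<in> carrier G" for g
    using decomp[OF M x xM mx that] .
  have phic: "\<phi> g \<in> carrier G" if "g \<in> carrier G" for g
    using dec[OF that] phi Mc y by fastforce
  have hom: "\<phi> \<in> hom G G"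
  proof (rule homI)
    fix a b assume ab: "a \<in> carrier G" "b \<in> carrier G"
    show "\<phi> a \<in> carrier G" using phic ab by simp
    obtain m k where mk: "m \<in> M" "a = m \<otimes> x [^] (k::nat)" using dec[OF ab(1)] by blast
    obtain m' k' where mk': "m' \<in> M" "b = m' \<otimes> x [^] (k'::nat)" using dec[OF ab(2)] by blast
    have mc: "m \<in> carrier G" "m' \<in> carrier G" using mk mk' Mc by auto
    have "a \<otimes> b = (m \<otimes> m') \<otimes> x [^] (k + k')" using mk mk' mc x by (simp add: nat_pow_mult m_ac add.commute)
    then have "\<phi> (a \<otimes> b) = (m \<otimes> m') \<otimes> y [^] (k + k')"
      using phi subgroup.m_closed[OF M mk(1) mk'(1)] by blast
    also have "\<dots> = \<phi> a \<otimes> \<phi> b" using phi[OF mk(1,2)] phi[OF mk'(1,2)] mc y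
      by (simp add: nat_pow_mult m_ac add.commute)
    finally show "\<phi> (a \<otimes> b) = \<phi> a \<otimes> \<phi> b" .
  qed
  have inj: "inj_on \<phi> (carrier G)"
  proof (rule inj_onI)
    fix a b assume ab: "a \<in> carrier G" "b \<in> carrier G" and e: "\<phi> a = \<phi> b"
    obtain m k where mk: "m \<in> M" "a = m \<otimes> x [^] (k::nat)" using dec[OF ab(1)] by blast
    obtain m' k' where mk': "m' \<in> M" "b = m' \<otimes> x [^] (k'::nat)" using dec[OF ab(2)] by blast
    have "m \<otimes> y [^] k = m' \<otimes> y [^] k'" using e phi[OF mk(1,2)] phi[OF mk'(1,2)] by simp
    then have "m \<otimes> x [^] k = m' \<otimes> x [^] k'" using uniq[OF M y yM x mk(1) mk'(1)] by blast
    then show "a = b" using mk mk' by simp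
  qed
  have "\<phi> ` carrier G = carrier G" using endo_inj_surj[OF fin _ inj] phic by blast
  then have "\<phi> \<in> iso G G" using hom inj by (simp add: iso_iff)
  moreover have "\<phi> x = y"
  proof -
    have "x = \<one> \<otimes> x [^] (1::nat)" using x by simp
    then have "\<phi> x = \<one> \<otimes> y [^] (1::nat)" using phi subgroup.one_closed[OF M] by blast
    then show ?thesis using y by simp
  qed
  ultimately show ?thesis by blast
qed

lemma transitive:
  assumes x: "x \<in> carrier G" "x \<noteq> \<one>" and y: "y \<in> carrier G" "y \<noteq> \<one>"
  shows "\<exists>\<phi> \<in> iso G G. \<phi> x = y"
proof (cases "y \<in> span {\<one>} x")
  case True
  then obtain k where k: "y = x [^] (k::nat)" using x by (auto simp: span_def)
  have nk: "\<not> p dvd k" using pow_dvd_one[OF x(1)] k y(2) by blast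
  obtain M where M: "subgroup M G" "x \<notin> M" "\<forall>H. subgroup H G \<and> M \<subseteq> H \<and> x \<notin> H \<longrightarrow> H = M"
    using max_exists[OF triv_subgroup, of x] x(2) by blast
  have yM: "p dvd j" if "y [^] j \<in> M" for j
  proof -
    have "x [^] (k * j) \<in> M" using that k x by (simp add: nat_pow_pow)
    then have "p dvd k * j" using pow_in_sub[OF M(1) x(1)] M(2) by blast
    then show ?thesis using nk pp prime_dvd_mult_iff by blast
  qed
  show ?thesis using auto_exists[OF M(1) x(1) M(2) M(3) y(1) yM] by blast
next
  case False
  define u where "u = inv x \<otimes> y"
  have uc: "u \<in> carrier G" using x y by (simp add: u_def)
  have yxu: "y = x \<otimes> u" using x y by (simp add: u_def m_assoc[symmetric])
  have S0: "subgroup (span {\<one>} u) G" using span_sub[OF triv_subgroup uc] .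
  have xS: "x \<notin> span {\<one>} u"
  proof
    assume "x \<in> span {\<one>} u"
    then obtain i where i: "x = u [^] (i::nat)" using uc by (auto simp: span_def)
    have ni: "\<not> p dvd i" using pow_dvd_one[OF uc] i x(2) by blast
    have "u [^] i \<in> span {\<one>} x" using i span_g[OF triv_subgroup x(1)] by simp
    then have "u \<in> span {\<one>} x" using pow_in_sub[OF span_sub[OF triv_subgroup x(1)] uc _ ni] by blast
    then have "x \<otimes> u \<in> span {\<one>} x"
      using subgroup.m_closed[OF span_sub[OF triv_subgroup x(1)] span_g[OF triv_subgroup x(1)]] by blast
    then show False using False yxu by simp
  qed
  obtain M where M: "subgroup M G" "span {\<one>} u \<subseteq> M" "x \<notin> M" "\<forall>H. subgroup H G \<and> M \<subseteq> H \<and> x \<notin> H \<longrightarrow> H = M"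
    using max_exists[OF S0 xS] by blast
  have uM: "u \<in> M" using M(2) span_g[OF triv_subgroup uc] by blast
  have yM: "p dvd j" if "y [^] j \<in> M" for j
  proof -
    have "y [^] j = x [^] j \<otimes> u [^] j" using yxu x uc by (simp add: nat_pow_distrib)
    then have "x [^] j = y [^] j \<otimes> inv (u [^] j)" using x uc by (simp add: m_assoc)
    moreover have "inv (u [^] j) \<in> M" using subgroup.m_inv_closed[OF M(1) subgroup_pow_closed[OF is_group M(1) uM]] .
    ultimately have "x [^] j \<in> M" using that subgroup.m_closed[OF M(1)] by simp
    then show ?thesis using pow_in_sub[OF M(1) x(1)] M(3) by blast
  qed
  show ?thesis using auto_exists[OF M(1) x(1) M(3) M(4) y(1) yM] by blast
qed

end

lemma elab_no_impostor:
  fixes G (structure)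
  assumes cg: "comm_group G" and fin: "finite (carrier G)"
    and pr: "Factorial_Ring.prime (group_exponent G)"
  shows "\<not> (\<exists>A. word_image_impostor G A)"
proof
  interpret comm_group G by fact
  define p where "p = group_exponent G"
  have ex: "\<exists>n::nat. 0 < n \<and> (\<forall>x \<in> carrier G. x [^] n = \<one>)"
  proof -
    have "0 < order G" using fin one_closed by (auto simp: order_def card_gt_0_iff)
    moreover have "\<forall>x \<in> carrier G. x [^] order G = \<one>" using pow_order_eq_1 by blast
    ultimately show ?thesis by blast
  qed
  have expo: "\<And>x. x \<in> carrier G \<Longrightarrow> x [^] p = \<one>"
    using LeastI_ex[OF ex] unfolding p_def group_exponent_def by blast
  interpret elab G p using fin pr expo by unfold_locales (auto simp: p_def)
  assume "\<exists>A. word_image_impostor G A"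
  then obtain A where A: "word_image_candidate G A" "\<forall>d \<ge> 1. \<forall>w \<in> free_words d. A \<noteq> word_image G d w"
    by (auto simp: word_image_impostor_def)
  have Ac: "A \<subseteq> carrier G" "\<one> \<in> A" "\<forall>\<phi> \<in> iso G G. \<phi> ` A \<subseteq> A"
    using A(1) by (auto simp: word_image_candidate_def)
  have fw0: "[] \<in> free_words 1" by (simp add: free_words_def)
  have fw1: "[(0, True)] \<in> free_words 1" by (simp add: free_words_def)
  have w0: "word_image G 1 [] = {\<one>}"
    by (auto simp: word_image_def intro!: exI[of _ "\<lambda>_. \<one>"])
  have w1: "word_image G 1 [(0, True)] = carrier G"
  proof
    show "word_image G 1 [(0, True)] \<subseteq> carrier G" by (auto simp: word_image_def)
    show "carrier G \<subseteq> word_image G 1 [(0, True)]"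
    proof
      fix c assume c: "c \<in> carrier G"
      have "c = eval_word G (\<lambda>_. c) [(0, True)]" using c by simp
      moreover have "(\<lambda>_. c) \<in> {..<1} \<rightarrow> carrier G" using c by simp
      ultimately show "c \<in> word_image G 1 [(0, True)]" unfolding word_image_def by blast
    qed
  qed
  show False
  proof (cases "A = {\<one>}")
    case True then show False using A(2) fw0 w0 by auto
  next
    case False
    then obtain x where x: "x \<in> A" "x \<noteq> \<one>" using Ac(2) by blast
    have "carrier G \<subseteq> A"
    proof
      fix y assume y: "y \<in> carrier G"
      show "y \<in> A"
      proof (cases "y = \<one>")
        case True then show ?thesis using Ac by simp
      next
        case False
        obtain \<phi> where "\<phi> \<in> iso G G" "\<phi> x = y" using transitive[of x y] x Ac(1) y False by blast
        then show ?thesis using Ac(3) x(1) by blast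
      qed
    qed
    then have "A = carrier G" using Ac(1) by blast
    then show False using A(2) fw1 w1 by auto
  qed
qed

theorem theorem3p2:
  fixes G :: "('a, 'b) monoid_scheme"
  assumes "nilpotent_group G" and "finite (carrier G)"
    and "carrier G \<noteq> {\<one>\<^bsub>G\<^esub>}"
  shows "(\<not> (\<exists>A. word_image_impostor G A)) \<longleftrightarrow>
           comm_group G \<and> Factorial_Ring.prime (group_exponent G)"
proof
  assume no: "\<not> (\<exists>A. word_image_impostor G A)"
  show "comm_group G \<and> Factorial_Ring.prime (group_exponent G)"
  proof (rule ccontr)
    assume n: "\<not> (comm_group G \<and> Factorial_Ring.prime (group_exponent G))"
    show False
    proof (cases "comm_group G")
      case True
      then show False using abelian_nonprime_impostor[OF True assms(2,3)] n no by blast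
    next
      case False
      then show False using nonabelian_impostor[OF assms(1) False] no by blast
    qed
  qed
next
  assume "comm_group G \<and> Factorial_Ring.prime (group_exponent G)"
  then show "\<not> (\<exists>A. word_image_impostor G A)"
    using elab_no_impostor assms(2) by blast
qed

end
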